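(* If $L_1$ is a context-free language and $L_2$ is a regular language (over the same finite alphabet), then $L_1 \leftarrow L_2$ and $L_2 \leftarrow L_1$ are context-free.
   Context: Outfix-guided insertion: $x \leftarrow y = \{ x_1 u z v x_2 \mid x = x_1 u v x_2,\ y = u z v,\ u \neq \varepsilon,\ v \neq \varepsilon \}$; for languages, $L_1 \leftarrow L_2 = \bigcup_{x \in L_1, y \in L_2} x \leftarrow y$. *)

theory Defs
  imports Main
begin

definition outfix_ins :: "'a list \<Rightarrow> 'a list \<Rightarrow> 'a list set" where
  "outfix_ins x y = {x1 @ u @ z @ v @ x2 | x1 u z v x2.
      x = x1 @ u @ v @ x2 \<and> y = u @ z @ v \<and> u \<noteq> [] \<and> v \<noteq> []}"

definition outfix_ins_lang :: "'a list set \<Rightarrow> 'a list set \<Rightarrow> 'a list set" where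
  "outfix_ins_lang L1 L2 = (\<Union>x\<in>L1. \<Union>y\<in>L2. outfix_ins x y)"

definition regular_lang :: "('a::finite) list set \<Rightarrow> bool" where
  "regular_lang L \<longleftrightarrow> (\<exists>(Q::nat set) q0 (\<delta>::nat \<Rightarrow> 'a \<Rightarrow> nat) F.
      finite Q \<and> q0 \<in> Q \<and> (\<forall>q\<in>Q. \<forall>a. \<delta> q a \<in> Q) \<and> F \<subseteq> Q \<and>
      L = {w. foldl \<delta> q0 w \<in> F})"

section \<open>Context-free languages (CFG: terminals Inl, nonterminals Inr nat)\<close>

definition cfg_step :: "(nat \<times> ('a + nat) list) set \<Rightarrow> ('a + nat) list \<Rightarrow> ('a + nat) list \<Rightarrow> bool" where
  "cfg_step P u v \<longleftrightarrow> (\<exists>\<alpha> \<beta> A r. u = \<alpha> @ [Inr A] @ \<beta> \<and> (A, r) \<in> P \<and> v = \<alpha> @ r @ \<beta>)"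

definition cfg_lang :: "(nat \<times> ('a + nat) list) set \<Rightarrow> nat \<Rightarrow> 'a list set" where
  "cfg_lang P S = {w. (cfg_step P)\<^sup>*\<^sup>* [Inr S] (map Inl w)}"

definition context_free :: "('a::finite) list set \<Rightarrow> bool" where
  "context_free L \<longleftrightarrow> (\<exists>P S. finite P \<and> L = cfg_lang P S)"

end

theory Submission
  imports Defs "HOL-Library.Countable"
begin

inductive gens :: "('n \<times> ('t + 'n) list) set \<Rightarrow> ('t + 'n) list \<Rightarrow> 't list \<Rightarrow> bool" for P where
  gnil: "gens P [] []"
| gterm: "gens P al w \<Longrightarrow> gens P (Inl a # al) (a # w)"
| gnt: "(A, r) \<in> P \<Longrightarrow> gens P r w1 \<Longrightarrow> gens P al w2 \<Longrightarrow> gens P (Inr A # al) (w1 @ w2)"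

lemma gens_append1: "gens P (x @ y) w \<Longrightarrow> \<exists>w1 w2. w = w1 @ w2 \<and> gens P x w1 \<and> gens P y w2"
proof (induction x arbitrary: w)
  case Nil then show ?case by (auto intro: gnil)
next
  case (Cons s x)
  show ?case
  proof (cases s)
    case (Inl a)
    with Cons.prems obtain w' where "w = a # w'" "gens P (x @ y) w'"
      by (auto elim: gens.cases)
    with Cons.IH show ?thesis using Inl by (metis append_Cons gterm)
  next
    case (Inr A)
    with Cons.prems obtain r w1 w2 where "w = w1 @ w2" "(A,r)\<in>P" "gens P r w1" "gens P (x @ y) w2"
      by (auto elim: gens.cases)
    with Cons.IH show ?thesis using Inr by (metis append_assoc append_Cons gnt)
  qed
qed

lemma gens_append2: "gens P x w1 \<Longrightarrow> gens P y w2 \<Longrightarrow> gens P (x @ y) (w1 @ w2)"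
proof (induction rule: gens.induct)
  case (gnt A r w1 al w2)
  then show ?case by (metis append_Cons append_assoc gens.gnt)
qed (auto intro: gens.intros)

lemma gens_append: "gens P (x @ y) w \<longleftrightarrow> (\<exists>w1 w2. w = w1 @ w2 \<and> gens P x w1 \<and> gens P y w2)"
  using gens_append1 gens_append2 by blast

lemma gens_map_Inl: "gens P (map Inl u) w \<longleftrightarrow> w = u"
proof (induction u arbitrary: w)
  case Nil then show ?case by (auto elim: gens.cases intro: gnil)
next
  case (Cons a u) then show ?case by (auto elim: gens.cases intro: gterm)
qed

lemma step_ctx: "(cfg_step P)\<^sup>*\<^sup>* u v \<Longrightarrow> (cfg_step P)\<^sup>*\<^sup>* (x @ u @ y) (x @ v @ y)"
proof (induction rule: rtranclp_induct)
  case base then show ?case by simp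
next
  case (step v v')
  then obtain al be A r where "v = al @ [Inr A] @ be" "(A,r)\<in>P" "v' = al @ r @ be"
    by (auto simp: cfg_step_def)
  then have "cfg_step P (x @ v @ y) (x @ v' @ y)"
    unfolding cfg_step_def by (rule_tac x="x@al" in exI, rule_tac x="be@y" in exI) auto
  with step show ?case by simp
qed

lemma gens_to_steps: "gens P al w \<Longrightarrow> (cfg_step P)\<^sup>*\<^sup>* al (map Inl w)"
proof (induction rule: gens.induct)
  case gnil then show ?case by simp
next
  case (gterm al w a)
  then show ?case using step_ctx[OF gterm(2), of "[Inl a]" "[]"] by simp
next
  case (gnt A r w1 al w2)
  have 1: "cfg_step P (Inr A # al) (r @ al)"
    unfolding cfg_step_def using gnt(1) by (rule_tac x="[]" in exI) auto
  have 2: "(cfg_step P)\<^sup>*\<^sup>* (r @ al) (map Inl w1 @ al)"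
    using step_ctx[OF gnt(4), of "[]" al] by simp
  have 3: "(cfg_step P)\<^sup>*\<^sup>* (map Inl w1 @ al) (map Inl w1 @ map Inl w2)"
    using step_ctx[OF gnt(5), of "map Inl w1" "[]"] by simp
  from 1 2 3 show ?case by simp
qed

lemma steps_to_gens: "(cfg_step P)\<^sup>*\<^sup>* al be \<Longrightarrow> gens P be w \<Longrightarrow> gens P al w"
proof (induction rule: converse_rtranclp_induct)
  case base then show ?case .
next
  case (step y z)
  then obtain x1 x2 A r where y: "y = x1 @ [Inr A] @ x2" "(A,r)\<in>P" "z = x1 @ r @ x2"
    by (auto simp: cfg_step_def)
  from step.IH step.prems y(3) have "gens P (x1 @ r @ x2) w" by simp
  then obtain w1 w2 w3 where "w = w1 @ w2 @ w3" "gens P x1 w1" "gens P r w2" "gens P x2 w3"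
    by (auto simp: gens_append)
  then show ?case using y(1,2) by (auto simp: gens_append intro!: gnt)
qed

lemma cfg_lang_gens: "cfg_lang P S = {w. gens P [Inr S] w}"
  unfolding cfg_lang_def
  using gens_to_steps steps_to_gens gens_map_Inl by blast

definition cfl :: "'t list set \<Rightarrow> bool" where
  "cfl L \<longleftrightarrow> (\<exists>(P::(nat \<times> ('t + nat) list) set) S. finite P \<and> L = {w. gens P [Inr S] w})"

definition renP :: "('n \<Rightarrow> 'm) \<Rightarrow> ('n \<times> ('t + 'n) list) set \<Rightarrow> ('m \<times> ('t + 'm) list) set" where
  "renP f P = (\<lambda>(A,r). (f A, map (map_sum id f) r)) ` P"

lemma ren1: "gens P al w \<Longrightarrow> gens (renP f P) (map (map_sum id f) al) w"
proof (induction rule: gens.induct)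
  case (gnt A r w1 al w2)
  have "(f A, map (map_sum id f) r) \<in> renP f P" using gnt(1) unfolding renP_def by force
  from gens.gnt[OF this gnt(4) gnt(5)] show ?case by simp
qed (auto intro: gens.intros)

lemma msI: "map (map_sum id f) al = Inl a # be \<Longrightarrow> \<exists>al'. al = Inl a # al' \<and> be = map (map_sum id f) al'"
  by (cases al; cases "hd al") auto

lemma msR: "map (map_sum id f) al = Inr B # be \<Longrightarrow> \<exists>A al'. al = Inr A # al' \<and> be = map (map_sum id f) al' \<and> B = f A"
  by (cases al; cases "hd al") auto

lemma ren2: "gens (renP f P) be w \<Longrightarrow> inj f \<Longrightarrow> be = map (map_sum id f) al \<Longrightarrow> gens P al w"
proof (induction arbitrary: al rule: gens.induct)
  case gnil then show ?case by (auto intro: gens.intros)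
next
  case (gterm be w a)
  then obtain al' where "al = Inl a # al'" "be = map (map_sum id f) al'"
    using msI[of f al a be] gterm(4)[symmetric] by blast
  with gterm show ?case by (auto intro: gens.intros)
next
  case (gnt B r w1 be w2)
  from gnt(7) obtain A al' where al: "al = Inr A # al'" "be = map (map_sum id f) al'" "B = f A"
    using msR[of f al B be] gnt(7)[symmetric] by blast
  from gnt(1) obtain A' r0 where "(A', r0) \<in> P" "f A' = B" "r = map (map_sum id f) r0"
    unfolding renP_def by auto
  with al gnt(6) have "A' = A" by (auto dest: injD)
  have "gens P r0 w1" using gnt(4)[of r0] \<open>r = _\<close> gnt(6) by blast
  moreover have "gens P al' w2" using gnt(5)[of al'] al gnt(6) by blast
  ultimately show ?case using al \<open>A' = A\<close> \<open>(A', r0) \<in> P\<close> by (auto intro: gens.gnt)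
qed

lemma cfl_countable:
  fixes P :: "('n::countable \<times> ('t + 'n) list) set"
  assumes "finite P" shows "cfl {w. gens P [Inr S] w}"
  unfolding cfl_def
proof (intro exI conjI)
  show "finite (renP to_nat P)" using assms unfolding renP_def by (rule finite_imageI)
  have "gens P [Inr S] w \<longleftrightarrow> gens (renP to_nat P) [Inr (to_nat S)] w" for w
  proof
    assume "gens P [Inr S] w"
    from ren1[OF this, of to_nat] show "gens (renP to_nat P) [Inr (to_nat S)] w" by simp
  next
    assume "gens (renP to_nat P) [Inr (to_nat S)] w"
    from ren2[OF this inj_to_nat, of "[Inr S]"] show "gens P [Inr S] w" by simp
  qed
  then show "{w. gens P [Inr S] w} = {w. gens (renP to_nat P) [Inr (to_nat S)] w}" by blast
qed

lemma context_free_cfl: "context_free L \<longleftrightarrow> cfl L"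
  unfolding context_free_def cfl_def cfg_lang_gens by simp

section \<open>Letter-to-letter maps\<close>

definition mapP :: "('t \<Rightarrow> 's) \<Rightarrow> ('n \<times> ('t + 'n) list) set \<Rightarrow> ('n \<times> ('s + 'n) list) set" where
  "mapP f P = (\<lambda>(A,r). (A, map (map_sum f id) r)) ` P"

lemma c1: "gens P al w \<Longrightarrow> gens (mapP f P) (map (map_sum f id) al) (map f w)"
proof (induction rule: gens.induct)
  case (gnt A r w1 al w2)
  have "(A, map (map_sum f id) r) \<in> mapP f P" using gnt(1) unfolding mapP_def by force
  from gens.gnt[OF this gnt(4) gnt(5)] show ?case by simp
qed (auto intro: gens.intros)

lemma mfI: "map (map_sum f id) al = Inl a # be \<Longrightarrow> \<exists>c al'. al = Inl c # al' \<and> a = f c \<and> be = map (map_sum f id) al'"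
  by (cases al; cases "hd al") auto

lemma mfR: "map (map_sum f id) al = Inr B # be \<Longrightarrow> \<exists>al'. al = Inr B # al' \<and> be = map (map_sum f id) al'"
  by (cases al; cases "hd al") auto

lemma c2: "gens (mapP f P) be w \<Longrightarrow> be = map (map_sum f id) al \<Longrightarrow> \<exists>w'. w = map f w' \<and> gens P al w'"
proof (induction arbitrary: al rule: gens.induct)
  case gnil then show ?case by (auto intro: gens.intros)
next
  case (gterm be w a)
  then obtain c al' where al: "al = Inl c # al'" "a = f c" "be = map (map_sum f id) al'"
    using mfI[of f al a be] gterm(3)[symmetric] by blast
  with gterm(2) obtain w' where "w = map f w'" "gens P al' w'" by blast
  with al show ?case by (rule_tac x="c # w'" in exI) (auto intro: gens.intros)
next
  case (gnt B r w1 be w2)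
  from gnt(6) obtain al' where al: "al = Inr B # al'" "be = map (map_sum f id) al'"
    using mfR[of f al B be] by metis
  from gnt(1) obtain r0 where "(B, r0) \<in> P" "r = map (map_sum f id) r0"
    unfolding mapP_def by auto
  with gnt(4) obtain w1' where "w1 = map f w1'" "gens P r0 w1'" by blast
  moreover from gnt(5) al obtain w2' where "w2 = map f w2'" "gens P al' w2'" by blast
  ultimately show ?case using al \<open>(B, r0) \<in> P\<close>
    by (rule_tac x="w1' @ w2'" in exI) (auto intro: gens.gnt)
qed

lemma cfl_map: "cfl L \<Longrightarrow> cfl (map f ` L)"
proof -
  assume "cfl L"
  then obtain P S where P: "finite (P :: (nat \<times> _) set)" "L = {w. gens P [Inr S] w}"
    unfolding cfl_def by blast
  have "map f ` L = {w. gens (mapP f P) [Inr S] w}"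
  proof (intro set_eqI iffI)
    fix w assume "w \<in> map f ` L"
    then obtain w' where "w = map f w'" "w' \<in> L" by blast
    then have "gens P [Inr S] w'" using P by blast
    then show "w \<in> {w. gens (mapP f P) [Inr S] w}" using c1[of P "[Inr S]" w' f] \<open>w = map f w'\<close> by simp
  next
    fix w assume "w \<in> {w. gens (mapP f P) [Inr S] w}"
    then have "gens (mapP f P) [Inr S] w" by simp
    from c2[OF this, of "[Inr S]"] obtain w' where "w = map f w'" "gens P [Inr S] w'" by auto
    then show "w \<in> map f ` L" using P by blast
  qed
  moreover have "finite (mapP f P)" using P unfolding mapP_def by simp
  ultimately show ?thesis unfolding cfl_def by blast
qed

section \<open>Inverse of partial codings\<close>

fun pmap :: "('b \<Rightarrow> 'a option) \<Rightarrow> 'b list \<Rightarrow> 'a list" where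
  "pmap g [] = []"
| "pmap g (x # xs) = (case g x of None \<Rightarrow> pmap g xs | Some a \<Rightarrow> a # pmap g xs)"

lemma pmap_append[simp]: "pmap g (xs @ ys) = pmap g xs @ pmap g ys"
  by (induction xs) (auto split: option.splits)

lemma pmap_nil_iff: "pmap g w = [] \<longleftrightarrow> (\<forall>b\<in>set w. g b = None)"
  by (induction w) (auto split: option.splits)

lemma pmap_split: "pmap g w = x @ y \<Longrightarrow> \<exists>w1 w2. w = w1 @ w2 \<and> pmap g w1 = x \<and> pmap g w2 = y"
proof (induction w arbitrary: x)
  case Nil then show ?case by auto
next
  case (Cons b w)
  show ?case
  proof (cases "g b")
    case None
    with Cons obtain w1 w2 where "w = w1 @ w2" "pmap g w1 = x" "pmap g w2 = y" by auto
    with None show ?thesis by (rule_tac x="b#w1" in exI) auto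
  next
    case (Some a)
    show ?thesis
    proof (cases x)
      case Nil
      with Cons.prems show ?thesis by (rule_tac x="[]" in exI) auto
    next
      case (Cons c x')
      with Cons.prems Some have "c = a" "pmap g w = x' @ y" by auto
      with Cons.IH obtain w1 w2 where "w = w1 @ w2" "pmap g w1 = x'" "pmap g w2 = y" by blast
      with Some \<open>c = a\<close> \<open>x = c # x'\<close> show ?thesis by (rule_tac x="b#w1" in exI) auto
    qed
  qed
qed

lemma pmap_cons: "pmap g w = a # y \<Longrightarrow> \<exists>j b rest. w = j @ b # rest \<and> pmap g j = [] \<and> g b = Some a \<and> pmap g rest = y"
proof (induction w)
  case Nil then show ?case by simp
next
  case (Cons b w)
  show ?case
  proof (cases "g b")
    case None
    with Cons obtain j c rest where "w = j @ c # rest" "pmap g j = []" "g c = Some a" "pmap g rest = y" by auto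
    with None show ?thesis by (rule_tac x="b#j" in exI) auto
  next
    case (Some a')
    with Cons.prems show ?thesis by (rule_tac x="[]" in exI) auto
  qed
qed

datatype ('n, 'a) nt2 = Old 'n | Let 'a | Junk | Start

instance nt2 :: (countable, countable) countable
  by countable_datatype

fun conv :: "'a + 'n \<Rightarrow> 'b + ('n, 'a) nt2" where
  "conv (Inl a) = Inr (Let a)"
| "conv (Inr B) = Inr (Old B)"

definition invP :: "('b \<Rightarrow> 'a option) \<Rightarrow> ('n \<times> ('a + 'n) list) set \<Rightarrow> 'n \<Rightarrow> bool \<Rightarrow>
    (('n,'a) nt2 \<times> ('b + ('n,'a) nt2) list) set" where
  "invP g P S e =
     (\<lambda>(A,r). (Old A, map conv r)) ` P
   \<union> (\<lambda>b. (Let (the (g b)), [Inr Junk, Inl b, Inr Junk])) ` {b. g b \<noteq> None}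
   \<union> {(Junk, [])}
   \<union> (\<lambda>b. (Junk, [Inl b, Inr Junk])) ` {b. g b = None}
   \<union> {(Start, [Inr (Old S)])}
   \<union> (if e then {(Start, [Inr Junk])} else {})"

lemma finite_invP: "finite P \<Longrightarrow> finite (invP g P S e :: (_ \<times> ('b::finite + _) list) set)"
  unfolding invP_def by auto

lemma junk1: "gens (invP g P S e) be w \<Longrightarrow> set be \<subseteq> {Inr Junk} \<union> Inl ` {b. g b = None} \<Longrightarrow> pmap g w = []"
proof (induction rule: gens.induct)
  case (gnt A r w1 al w2)
  then have "A = Junk" by auto
  with gnt(1) have "set r \<subseteq> {Inr Junk} \<union> Inl ` {b. g b = None}" unfolding invP_def by (auto split: if_splits)
  with gnt show ?case by auto
qed (auto split: option.splits)

lemma junk2: "pmap g w = [] \<Longrightarrow> gens (invP g P S e) [Inr Junk] w"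
proof (induction w)
  case Nil
  have "(Junk, []) \<in> invP g P S e" unfolding invP_def by auto
  from gens.gnt[OF this gnil gnil] show ?case by simp
next
  case (Cons b w)
  then have "g b = None" "pmap g w = []" by (auto split: option.splits)
  then have r: "(Junk, [Inl b, Inr Junk]) \<in> invP g P S e" unfolding invP_def by auto
  have "gens (invP g P S e) [Inl b, Inr Junk] (b # w)"
    using gterm[OF Cons.IH[OF \<open>pmap g w = []\<close>]] .
  from gens.gnt[OF r this gnil] show ?case by simp
qed

lemma letgen: "gens (invP g P S e) [Inr (Let a)] w \<Longrightarrow> pmap g w = [a]"
proof -
  assume "gens (invP g P S e) [Inr (Let a)] w"
  then obtain r w1 w2 where w: "w = w1 @ w2" "(Let a, r) \<in> invP g P S e" "gens (invP g P S e) r w1"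
     "gens (invP g P S e) [] w2"
    by (auto elim: gens.cases)
  from w(4) have "w2 = []" by (auto elim: gens.cases)
  from w(2) obtain b where b: "g b = Some a" "r = [Inr Junk, Inl b, Inr Junk]"
    unfolding invP_def by (auto split: if_splits)
  from w(3) b(2) have "gens (invP g P S e) ([Inr Junk] @ [Inl b, Inr Junk]) w1" by simp
  then obtain u1 v where u: "w1 = u1 @ v" "gens (invP g P S e) [Inr Junk] u1" "gens (invP g P S e) [Inl b, Inr Junk] v"
    unfolding gens_append by blast
  from u(3) obtain u3 where v: "v = b # u3" "gens (invP g P S e) [Inr Junk] u3"
    by (auto elim: gens.cases)
  have "pmap g u1 = []" using junk1[OF u(2)] by simp
  moreover have "pmap g u3 = []" using junk1[OF v(2)] by simp
  moreover have "w1 = u1 @ [b] @ u3" using u(1) v(1) by simp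
  ultimately show ?thesis using \<open>w2 = []\<close> w(1) b(1) by simp
qed

lemma letgen2: "pmap g j = [] \<Longrightarrow> g b = Some a \<Longrightarrow> pmap g k = [] \<Longrightarrow> gens (invP g P S e) [Inr (Let a)] (j @ [b] @ k)"
proof -
  assume a: "pmap g j = []" "g b = Some a" "pmap g k = []"
  have r: "(Let a, [Inr Junk, Inl b, Inr Junk]) \<in> invP g P S e"
    unfolding invP_def using a(2) by (auto intro!: image_eqI[where x=b])
  have "gens (invP g P S e) ([Inr Junk] @ [Inl b, Inr Junk]) (j @ b # k)"
    using gens_append2[OF junk2[OF a(1)] gterm[OF junk2[OF a(3)]]] by simp
  from gens.gnt[OF r _ gnil] this show ?thesis by simp
qed

lemma conv_cons:
  fixes al :: "('a + 'n) list" and be :: "('b + ('n,'a) nt2) list"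
  shows "map conv al = Inr X # be \<Longrightarrow> \<exists>x al'. al = x # al' \<and> (conv x :: 'b + ('n,'a) nt2) = Inr X \<and> be = map conv al'"
  by (cases al) auto

lemma conv_Inl: "conv x \<noteq> Inl a"
  by (cases x) auto

lemma old_prod: "(Old B, r) \<in> invP g P S e \<Longrightarrow> \<exists>r0. (B, r0) \<in> P \<and> r = map conv r0"
  unfolding invP_def by (auto split: if_splits)

lemma M1:
  fixes g :: "'b \<Rightarrow> 'a option" and P :: "('n \<times> ('a + 'n) list) set"
  shows "gens (invP g P S e) be w \<Longrightarrow> be = map conv al \<Longrightarrow> gens P al (pmap g w) \<and> (w = [] \<or> pmap g w \<noteq> [])"
proof (induction arbitrary: al rule: gens.induct)
  case gnil then show ?case by (auto intro: gens.intros)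
next
  case (gterm be w a)
  show ?case using gterm(3) by (cases al; cases "hd al") auto
next
  case (gnt X r w1 be w2)
  from conv_cons[OF gnt(6)[symmetric]] obtain x al' where al: "al = x # al'" "conv x = (Inr X :: 'b + ('n,'a) nt2)" "be = map conv al'"
    by blast
  from gnt(5)[OF al(3)] have IH2: "gens P al' (pmap g w2)" "w2 = [] \<or> pmap g w2 \<noteq> []" by (rule conjunct1, rule conjunct2)
  show ?case
  proof (cases x)
    case (Inl a)
    with al have "X = Let a" by simp
    with gens.gnt[OF gnt(1) gnt(2) gnil] have "gens (invP g P S e) [Inr (Let a)] (w1 @ [])" by (simp only:)
    then have "pmap g w1 = [a]" using letgen by (simp only: append_Nil2)
    moreover have "gens P (Inl a # al') (a # pmap g w2)" using IH2(1) by (rule gterm)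
    ultimately show ?thesis using al Inl by simp
  next
    case (Inr B)
    with al have "X = Old B" by simp
    with gnt(1) have "(Old B, r) \<in> invP g P S e" by simp
    from old_prod[OF this] obtain r0 where "(B, r0) \<in> P" "r = map conv r0" by blast
    from gnt(4)[OF \<open>r = map conv r0\<close>] have "gens P r0 (pmap g w1)" "w1 = [] \<or> pmap g w1 \<noteq> []" by (rule conjunct1, rule conjunct2)
    moreover have "gens P (Inr B # al') (pmap g w1 @ pmap g w2)"
      using gens.gnt[OF \<open>(B, r0) \<in> P\<close> calculation(1) IH2(1)] .
    ultimately show ?thesis using IH2(2) al Inr by auto
  qed
qed

lemma split_C: "pmap g w = x @ y \<Longrightarrow> (w = [] \<or> x @ y \<noteq> []) \<Longrightarrow>
   \<exists>v1 v2. w = v1 @ v2 \<and> pmap g v1 = x \<and> pmap g v2 = y \<and> (v1 = [] \<or> x \<noteq> []) \<and> (v2 = [] \<or> y \<noteq> [])"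
proof -
  assume a: "pmap g w = x @ y" "w = [] \<or> x @ y \<noteq> []"
  show ?thesis
  proof (cases "x = []")
    case True then show ?thesis using a by (rule_tac x="[]" in exI) auto
  next
    case False
    show ?thesis
    proof (cases "y = []")
      case True then show ?thesis using a by (rule_tac x="w" in exI) auto
    next
      case False
      with \<open>x \<noteq> []\<close> pmap_split[OF a(1)] show ?thesis by blast
    qed
  qed
qed

lemma M2: "gens P al w' \<Longrightarrow> pmap g w = w' \<Longrightarrow> (w = [] \<or> w' \<noteq> []) \<Longrightarrow> gens (invP g P S e) (map conv al) w"
proof (induction arbitrary: w rule: gens.induct)
  case gnil then show ?case by (auto intro: gens.intros)
next
  case (gterm al w'' a)
  from pmap_cons[OF gterm(3)] obtain j b rest where jr: "w = j @ b # rest" "pmap g j = []" "g b = Some a" "pmap g rest = w''"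
    by blast
  show ?case
  proof (cases "w'' = []")
    case True
    with jr have "gens (invP g P S e) [Inr (Let a)] (j @ [b] @ rest)" using letgen2[OF jr(2) jr(3)] by simp
    moreover have "gens (invP g P S e) (map conv al) []" using gterm.IH[of "[]"] True by simp
    ultimately show ?thesis using gens_append2[of _ "[Inr (Let a)]" "j @ [b] @ rest" "map conv al" "[]"] jr(1)
      by simp
  next
    case False
    with jr have "gens (invP g P S e) [Inr (Let a)] (j @ [b] @ [])" using letgen2[OF jr(2) jr(3), of "[]"] by simp
    moreover have "gens (invP g P S e) (map conv al) rest" using gterm.IH[of rest] False jr by simp
    ultimately show ?thesis using gens_append2[of _ "[Inr (Let a)]" "j @ [b] @ []" "map conv al" rest] jr(1)
      by simp
  qed
next
  case (gnt A r w1 al w2)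
  from split_C[OF gnt(6) gnt(7)] obtain v1 v2 where v: "w = v1 @ v2" "pmap g v1 = w1" "pmap g v2 = w2"
     "v1 = [] \<or> w1 \<noteq> []" "v2 = [] \<or> w2 \<noteq> []" by blast
  have r: "(Old A, map conv r) \<in> invP g P S e" unfolding invP_def using gnt(1) by force
  from gens.gnt[OF r gnt.IH(1)[OF v(2) v(4)] gnt.IH(2)[OF v(3) v(5)]] v(1) show ?case by simp
qed

lemma inv_lang: "{w. gens (invP g P S ([] \<in> {w. gens P [Inr S] w})) [Inr Start] w} = {w. pmap g w \<in> {w. gens P [Inr S] w}}"
  (is "{w. gens ?P' _ w} = _")
proof (intro set_eqI iffI)
  fix w assume "w \<in> {w. gens ?P' [Inr Start] w}"
  then obtain r w1 w2 where w: "w = w1 @ w2" "(Start, r) \<in> ?P'" "gens ?P' r w1" "gens ?P' [] w2"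
    by (auto elim: gens.cases)
  from w(4) have "w2 = []" by (auto elim: gens.cases)
  from w(2) have "r = [Inr (Old S)] \<or> (r = [Inr Junk] \<and> gens P [Inr S] [])"
    unfolding invP_def by (auto split: if_splits)
  then show "w \<in> {w. pmap g w \<in> {w. gens P [Inr S] w}}"
  proof
    assume "r = [Inr (Old S)]"
    with M1[OF w(3), of "[Inr S]"] show ?thesis using w(1) \<open>w2 = []\<close> by simp
  next
    assume "r = [Inr Junk] \<and> gens P [Inr S] []"
    with junk1[OF w(3)] show ?thesis using w(1) \<open>w2 = []\<close> by simp
  qed
next
  fix w assume "w \<in> {w. pmap g w \<in> {w. gens P [Inr S] w}}"
  then have g: "gens P [Inr S] (pmap g w)" by simp
  show "w \<in> {w. gens ?P' [Inr Start] w}"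
  proof (cases "w = [] \<or> pmap g w \<noteq> []")
    case True
    from M2[OF g refl True] have "gens ?P' [Inr (Old S)] w" by simp
    moreover have "(Start, [Inr (Old S)]) \<in> ?P'" unfolding invP_def by simp
    ultimately show ?thesis using gens.gnt[OF _ _ gnil] by fastforce
  next
    case False
    then have "pmap g w = []" by simp
    with g have "(Start, [Inr Junk]) \<in> ?P'" unfolding invP_def by simp
    moreover have "gens ?P' [Inr Junk] w" by (rule junk2) fact
    ultimately show ?thesis using gens.gnt[OF _ _ gnil] by fastforce
  qed
qed

lemma cfl_inv:
  fixes g :: "'b::finite \<Rightarrow> 'a::countable option"
  assumes "cfl L" shows "cfl {w. pmap g w \<in> L}"
proof -
  from assms obtain P S where P: "finite (P :: (nat \<times> _) set)" "L = {w. gens P [Inr S] w}"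
    unfolding cfl_def by blast
  have "finite (invP g P S ([] \<in> L))" using finite_invP[OF P(1)] by blast
  from cfl_countable[OF this, of Start] inv_lang[of g P S] P(2) show ?thesis by simp
qed

section \<open>Intersection with a DFA\<close>

fun trip :: "('q \<Rightarrow> 't \<Rightarrow> 'q) \<Rightarrow> 'q set \<Rightarrow> 'q \<Rightarrow> ('t + 'n) list \<Rightarrow> 'q \<Rightarrow> ('t + ('q \<times> 'n \<times> 'q) option) list set" where
  "trip d Q p [] q = (if p = q then {[]} else {})"
| "trip d Q p (Inl a # r) q = (#) (Inl a) ` trip d Q (d p a) r q"
| "trip d Q p (Inr B # r) q = (\<Union>s\<in>Q. (#) (Inr (Some (p,B,s))) ` trip d Q s r q)"

lemma finite_trip: "finite Q \<Longrightarrow> finite (trip d Q p r q)"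
proof (induction r arbitrary: p)
  case Nil then show ?case by simp
next
  case (Cons x r) then show ?case by (cases x) auto
qed

definition intP :: "('q \<Rightarrow> 't \<Rightarrow> 'q) \<Rightarrow> 'q set \<Rightarrow> 'q \<Rightarrow> 'q set \<Rightarrow> ('n \<times> ('t + 'n) list) set \<Rightarrow> 'n \<Rightarrow>
   (('q \<times> 'n \<times> 'q) option \<times> ('t + ('q \<times> 'n \<times> 'q) option) list) set" where
  "intP d Q q0 F P S =
     (\<Union>(A,r)\<in>P. \<Union>p\<in>Q. \<Union>q\<in>Q. (\<lambda>r'. (Some (p,A,q), r')) ` trip d Q p r q)
   \<union> (\<lambda>f. (None, [Inr (Some (q0,S,f))])) ` F"

lemma finite_intP: "finite P \<Longrightarrow> finite Q \<Longrightarrow> F \<subseteq> Q \<Longrightarrow> finite (intP d Q q0 F P S)"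
  unfolding intP_def by (auto intro!: finite_UN_I finite_trip dest: finite_subset)

lemma trip_nil: "[] \<in> trip d Q p al q \<Longrightarrow> al = [] \<and> p = q"
  by (cases al; cases "hd al") (auto split: if_splits)

lemma trip_Inl: "Inl a # be \<in> trip d Q p al q \<Longrightarrow> \<exists>al'. al = Inl a # al' \<and> be \<in> trip d Q (d p a) al' q"
  by (cases al; cases "hd al") (auto split: if_splits)

lemma trip_Inr: "Inr X # be \<in> trip d Q p al q \<Longrightarrow> \<exists>B s al'. al = Inr B # al' \<and> X = Some (p,B,s) \<and> s \<in> Q \<and> be \<in> trip d Q s al' q"
  by (cases al; cases "hd al") (auto split: if_splits)

lemma intP_Some: "(Some (p,B,s), r) \<in> intP d Q q0 F P S \<Longrightarrow> \<exists>r0. (B,r0) \<in> P \<and> p \<in> Q \<and> s \<in> Q \<and> r \<in> trip d Q p r0 s"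
  unfolding intP_def by auto

lemma intP_SomeI: "(A,r0) \<in> P \<Longrightarrow> p \<in> Q \<Longrightarrow> s \<in> Q \<Longrightarrow> r \<in> trip d Q p r0 s \<Longrightarrow> (Some (p,A,s), r) \<in> intP d Q q0 F P S"
proof -
  assume a: "(A,r0) \<in> P" "p \<in> Q" "s \<in> Q" "r \<in> trip d Q p r0 s"
  have "(Some (p,A,s), r) \<in> (\<lambda>r'. (Some (p,A,s), r')) ` trip d Q p r0 s" using a(4) by (rule imageI)
  then have "(Some (p,A,s), r) \<in> (\<Union>q\<in>Q. (\<lambda>r'. (Some (p,A,q), r')) ` trip d Q p r0 q)" using a(3) by blast
  then have "(Some (p,A,s), r) \<in> (\<Union>p'\<in>Q. \<Union>q\<in>Q. (\<lambda>r'. (Some (p',A,q), r')) ` trip d Q p' r0 q)" using a(2) by blast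
  then have "(Some (p,A,s), r) \<in> (\<Union>(A,r)\<in>P. \<Union>p'\<in>Q. \<Union>q\<in>Q. (\<lambda>r'. (Some (p',A,q), r')) ` trip d Q p' r q)"
    using a(1) by fastforce
  then show ?thesis unfolding intP_def by (rule UnI1)
qed

lemma intP_None: "(None, r) \<in> intP d Q q0 F P S \<Longrightarrow> \<exists>f\<in>F. r = [Inr (Some (q0,S,f))]"
  unfolding intP_def by auto

lemma foldl_closed: "\<forall>q\<in>Q. \<forall>a. d q a \<in> Q \<Longrightarrow> p \<in> Q \<Longrightarrow> foldl d p w \<in> Q"
  by (induction w arbitrary: p) auto

lemma I1: "gens (intP d Q q0 F P S) be w \<Longrightarrow> be \<in> trip d Q p al q \<Longrightarrow> gens P al w \<and> foldl d p w = q"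
proof (induction arbitrary: p al q rule: gens.induct)
  case gnil
  from trip_nil[OF gnil] show ?case by (auto intro: gens.gnil)
next
  case (gterm be w a)
  from trip_Inl[OF gterm(3)] obtain al' where "al = Inl a # al'" "be \<in> trip d Q (d p a) al' q" by blast
  with gterm(2)[of "d p a" al'] show ?case by (auto intro: gens.gterm)
next
  case (gnt X r w1 be w2)
  from trip_Inr[OF gnt(6)] obtain B s al' where al: "al = Inr B # al'" "X = Some (p,B,s)" "s \<in> Q" "be \<in> trip d Q s al' q"
    by blast
  from gnt(1) al(2) have "(Some (p,B,s), r) \<in> intP d Q q0 F P S" by simp
  from intP_Some[OF this] obtain r0 where r0: "(B,r0) \<in> P" "r \<in> trip d Q p r0 s" by blast
  from gnt(4)[OF r0(2)] have 1: "gens P r0 w1" "foldl d p w1 = s" by auto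
  from gnt(5)[OF al(4)] have 2: "gens P al' w2" "foldl d s w2 = q" by auto
  from gens.gnt[OF r0(1) 1(1) 2(1)] 1(2) 2(2) al(1) show ?case by simp
qed

lemma I2: "gens P al w \<Longrightarrow> \<forall>q\<in>Q. \<forall>a. d q a \<in> Q \<Longrightarrow> p \<in> Q \<Longrightarrow>
   \<exists>be \<in> trip d Q p al (foldl d p w). gens (intP d Q q0 F P S) be w"
proof (induction arbitrary: p rule: gens.induct)
  case gnil show ?case by (rule bexI[of _ "[]"]) (auto intro: gens.gnil)
next
  case (gterm al w a)
  have "d p a \<in> Q" using gterm(3,4) by blast
  from gterm(2)[OF gterm(3) this] obtain be where "be \<in> trip d Q (d p a) al (foldl d (d p a) w)"
    "gens (intP d Q q0 F P S) be w" by blast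
  then show ?case by (intro bexI[of _ "Inl a # be"]) (auto intro: gens.gterm)
next
  case (gnt A r w1 al w2)
  define s where "s = foldl d p w1"
  have sQ: "s \<in> Q" unfolding s_def by (rule foldl_closed[OF gnt(6,7)])
  have "\<exists>be\<in>trip d Q p r s. gens (intP d Q q0 F P S) be w1" unfolding s_def by (rule gnt(4)[OF gnt(6,7)])
  then obtain be1 where be1: "be1 \<in> trip d Q p r s" "gens (intP d Q q0 F P S) be1 w1" ..
  have "\<exists>be\<in>trip d Q s al (foldl d s w2). gens (intP d Q q0 F P S) be w2" by (rule gnt(5)[OF gnt(6) sQ])
  then obtain be2 where be2: "be2 \<in> trip d Q s al (foldl d s w2)" "gens (intP d Q q0 F P S) be2 w2" ..
  have pr: "(Some (p,A,s), be1) \<in> intP d Q q0 F P S"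
    using gnt(1) gnt(7) sQ be1(1) by (rule intP_SomeI)
  have "Inr (Some (p,A,s)) # be2 \<in> trip d Q p (Inr A # al) (foldl d s w2)"
    using be2(1) sQ by (simp only: trip.simps) (rule UN_I, assumption, rule imageI)
  then have "Inr (Some (p,A,s)) # be2 \<in> trip d Q p (Inr A # al) (foldl d p (w1 @ w2))"
    unfolding s_def by simp
  moreover have "gens (intP d Q q0 F P S) (Inr (Some (p,A,s)) # be2) (w1 @ w2)"
    using gens.gnt[OF pr be1(2) be2(2)] .
  ultimately show ?case by blast
qed

lemma int_lang:
  assumes cl: "\<forall>q\<in>Q. \<forall>a. d q a \<in> Q" and q0: "q0 \<in> Q" and F: "F \<subseteq> Q"
  shows "{w. gens (intP d Q q0 F P S) [Inr None] w} = {w. gens P [Inr S] w} \<inter> {w. foldl d q0 w \<in> F}"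
proof (intro set_eqI iffI)
  fix w assume "w \<in> {w. gens (intP d Q q0 F P S) [Inr None] w}"
  then obtain r w1 w2 where w: "w = w1 @ w2" "(None, r) \<in> intP d Q q0 F P S" "gens (intP d Q q0 F P S) r w1"
     "gens (intP d Q q0 F P S) [] w2"
    by (auto elim: gens.cases)
  from w(4) have "w2 = []" by (auto elim: gens.cases)
  from intP_None[OF w(2)] obtain f where f: "f \<in> F" "r = [Inr (Some (q0,S,f))]" by blast
  have "r \<in> trip d Q q0 [Inr S] f" using f F by auto
  from I1[OF w(3) this] f(1) w(1) \<open>w2 = []\<close> show "w \<in> {w. gens P [Inr S] w} \<inter> {w. foldl d q0 w \<in> F}" by simp
next
  fix w assume "w \<in> {w. gens P [Inr S] w} \<inter> {w. foldl d q0 w \<in> F}"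
  then have g: "gens P [Inr S] w" and f: "foldl d q0 w \<in> F" by auto
  from I2[OF g cl q0] obtain be where be: "be \<in> trip d Q q0 [Inr S] (foldl d q0 w)"
    "gens (intP d Q q0 F P S) be w" by blast
  from be(1) have "be = [Inr (Some (q0,S,foldl d q0 w))]" by (auto split: if_splits)
  moreover have "(None, [Inr (Some (q0,S,foldl d q0 w))]) \<in> intP d Q q0 F P S"
    unfolding intP_def using f by blast
  ultimately show "w \<in> {w. gens (intP d Q q0 F P S) [Inr None] w}"
    using gens.gnt[OF _ be(2) gnil] by fastforce
qed

lemma cfl_int:
  fixes d :: "'q::countable \<Rightarrow> 't \<Rightarrow> 'q"
  assumes "cfl L" "finite Q" "\<forall>q\<in>Q. \<forall>a. d q a \<in> Q" "q0 \<in> Q" "F \<subseteq> Q"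
  shows "cfl (L \<inter> {w. foldl d q0 w \<in> F})"
proof -
  from assms(1) obtain P S where P: "finite (P :: (nat \<times> _) set)" "L = {w. gens P [Inr S] w}"
    unfolding cfl_def by blast
  have "finite (intP d Q q0 F P S)" using finite_intP[OF P(1) assms(2,5)] .
  from cfl_countable[OF this, of None] int_lang[OF assms(3,4,5), of P S] P(2) show ?thesis by simp
qed

datatype tag = X1 | TU | TZ | TV | X2

instance tag :: finite
proof
  have "(UNIV :: tag set) = {X1, TU, TZ, TV, X2}" by (auto intro: tag.exhaust)
  then show "finite (UNIV :: tag set)" by (metis finite.emptyI finite.insertI)
qed

definition pd :: "nat \<Rightarrow> tag \<Rightarrow> nat" where
  "pd p t = (if p = 0 \<and> t = X1 then 0 else if p \<le> 1 \<and> t = TU then 1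
     else if (p = 1 \<or> p = 2) \<and> t = TZ then 2 else if 1 \<le> p \<and> p \<le> 3 \<and> t = TV then 3
     else if (p = 3 \<or> p = 4) \<and> t = X2 then 4 else 5)"

lemma pd0: "pd 0 t = (if t = X1 then 0 else if t = TU then 1 else 5)" by (simp add: pd_def)
lemma pd1: "pd 1 t = (if t = TU then 1 else if t = TZ then 2 else if t = TV then 3 else 5)" by (simp add: pd_def)
lemma pd2: "pd 2 t = (if t = TZ then 2 else if t = TV then 3 else 5)" by (simp add: pd_def)
lemma pd3: "pd 3 t = (if t = TV then 3 else if t = X2 then 4 else 5)" by (simp add: pd_def)
lemma pd4: "pd 4 t = (if t = X2 then 4 else 5)" by (simp add: pd_def)
lemma pd5': "pd 5 t = 5" by (simp add: pd_def)
lemma pd1s: "pd (Suc 0) t = (if t = TU then 1 else if t = TZ then 2 else if t = TV then 3 else 5)" by (simp add: pd_def)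
lemmas pds = pd0 pd1 pd1s pd2 pd3 pd4 pd5'

lemma pd5: "foldl pd 5 ts = 5"
  by (induction ts) (auto simp: pd5')

lemma pd_le: "pd p t \<le> 5" by (auto simp: pd_def)

lemma stay: "(\<forall>p\<in>A. pd p t \<in> A) \<Longrightarrow> p \<in> A \<Longrightarrow> set xs \<subseteq> {t} \<Longrightarrow> foldl pd p xs \<in> A"
  by (induction xs arbitrary: p) auto

lemma stay1: "(\<forall>p\<in>A. pd p t = r) \<Longrightarrow> r \<in> A \<Longrightarrow> p \<in> A \<Longrightarrow> xs \<noteq> [] \<Longrightarrow> set xs \<subseteq> {t} \<Longrightarrow> foldl pd p xs = r"
proof (induction xs arbitrary: p)
  case Nil then show ?case by simp
next
  case (Cons x xs)
  then show ?case by (cases "xs = []") auto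
qed

definition pat :: "tag list \<Rightarrow> bool" where
  "pat ts \<longleftrightarrow> (\<exists>a b c d e. ts = a @ b @ c @ d @ e \<and> set a \<subseteq> {X1} \<and> b \<noteq> [] \<and> set b \<subseteq> {TU} \<and>
      set c \<subseteq> {TZ} \<and> d \<noteq> [] \<and> set d \<subseteq> {TV} \<and> set e \<subseteq> {X2})"

lemma pat_back: "pat ts \<Longrightarrow> foldl pd 0 ts \<in> {3,4}"
proof -
  assume "pat ts"
  then obtain a b c d e where ts: "ts = a @ b @ c @ d @ e" "set a \<subseteq> {X1}" "b \<noteq> []" "set b \<subseteq> {TU}"
      "set c \<subseteq> {TZ}" "d \<noteq> []" "set d \<subseteq> {TV}" "set e \<subseteq> {X2}" unfolding pat_def by blast
  have 1: "foldl pd 0 a = 0" using stay[of "{0}" X1 0 a] ts(2) by (simp add: pds)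
  have 2: "foldl pd 0 b = 1" using stay1[of "{0,1}" TU 1 0 b] ts(3,4) by (simp add: pds)
  have 3: "foldl pd 1 c \<in> {1,2}" using stay[of "{1,2}" TZ 1 c] ts(5) by (simp add: pds)
  have 4: "foldl pd (foldl pd 1 c) d = 3" using stay1[of "{1,2,3}" TV 3 "foldl pd 1 c" d] 3 ts(6,7) by (simp add: pds) blast
  have 5: "foldl pd 3 e \<in> {3,4}" using stay[of "{3,4}" X2 3 e] ts(8) by (simp add: pds)
  show ?thesis using 1 2 4 5 ts(1) by simp
qed

lemma f4: "foldl pd 4 ts \<in> {3,4} \<Longrightarrow> set ts \<subseteq> {X2}"
proof (induction ts)
  case (Cons t ts)
  show ?case
  proof (cases "t = X2")
    case True with Cons show ?thesis by (simp add: pds)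
  next
    case False
    then have "pd 4 t = 5" by (simp add: pds)
    with Cons.prems pd5 show ?thesis by simp
  qed
qed simp

lemma f3: "foldl pd 3 ts \<in> {3,4} \<Longrightarrow> \<exists>d e. ts = d @ e \<and> set d \<subseteq> {TV} \<and> set e \<subseteq> {X2}"
proof (induction ts)
  case Nil then show ?case by simp
next
  case (Cons t ts)
  consider "t = TV" | "t = X2" | "t \<noteq> TV \<and> t \<noteq> X2" by blast
  then show ?case
  proof cases
    case 1
    with Cons have "foldl pd 3 ts \<in> {3,4}" by (simp add: pds)
    with Cons.IH obtain d e where "ts = d @ e" "set d \<subseteq> {TV}" "set e \<subseteq> {X2}" by blast
    with 1 show ?thesis by (rule_tac x="TV # d" in exI) auto
  next
    case 2
    with Cons have "foldl pd 4 ts \<in> {3,4}" by (simp add: pds)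
    from f4[OF this] 2 show ?thesis by (rule_tac x="[]" in exI) auto
  next
    case 3
    then have "pd 3 t = 5" by (simp add: pds)
    with Cons.prems pd5 show ?thesis by simp
  qed
qed

lemma f2: "foldl pd 2 ts \<in> {3,4} \<Longrightarrow> \<exists>c d e. ts = c @ d @ e \<and> set c \<subseteq> {TZ} \<and> d \<noteq> [] \<and> set d \<subseteq> {TV} \<and> set e \<subseteq> {X2}"
proof (induction ts)
  case Nil then show ?case by simp
next
  case (Cons t ts)
  consider "t = TZ" | "t = TV" | "t \<noteq> TZ \<and> t \<noteq> TV" by blast
  then show ?case
  proof cases
    case 1
    with Cons have "foldl pd 2 ts \<in> {3,4}" by (simp add: pds)
    with Cons.IH obtain c d e where "ts = c @ d @ e" "set c \<subseteq> {TZ}" "d \<noteq> []" "set d \<subseteq> {TV}" "set e \<subseteq> {X2}" by blast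
    with 1 show ?thesis by (rule_tac x="TZ # c" in exI) auto
  next
    case 2
    with Cons have "foldl pd 3 ts \<in> {3,4}" by (simp add: pds)
    from f3[OF this] obtain d e where "ts = d @ e" "set d \<subseteq> {TV}" "set e \<subseteq> {X2}" by blast
    with 2 show ?thesis by (rule_tac x="[]" in exI, rule_tac x="TV # d" in exI) auto
  next
    case 3
    then have "pd 2 t = 5" by (simp add: pds)
    with Cons.prems pd5 show ?thesis by simp
  qed
qed

lemma f1: "foldl pd 1 ts \<in> {3,4} \<Longrightarrow> \<exists>b c d e. ts = b @ c @ d @ e \<and> set b \<subseteq> {TU} \<and> set c \<subseteq> {TZ} \<and> d \<noteq> [] \<and> set d \<subseteq> {TV} \<and> set e \<subseteq> {X2}"
proof (induction ts)
  case Nil then show ?case by simp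
next
  case (Cons t ts)
  consider "t = TU" | "t = TZ" | "t = TV" | "t \<noteq> TU \<and> t \<noteq> TZ \<and> t \<noteq> TV" by blast
  then show ?case
  proof cases
    case 1
    with Cons have "foldl pd 1 ts \<in> {3,4}" by (simp add: pds)
    with Cons.IH obtain b c d e where "ts = b @ c @ d @ e" "set b \<subseteq> {TU}" "set c \<subseteq> {TZ}" "d \<noteq> []" "set d \<subseteq> {TV}" "set e \<subseteq> {X2}" by blast
    with 1 show ?thesis by (rule_tac x="TU # b" in exI) auto
  next
    case 2
    with Cons have "foldl pd 2 ts \<in> {3,4}" by (simp add: pds)
    from f2[OF this] obtain c d e where "ts = c @ d @ e" "set c \<subseteq> {TZ}" "d \<noteq> []" "set d \<subseteq> {TV}" "set e \<subseteq> {X2}" by blast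
    with 2 show ?thesis by (rule_tac x="[]" in exI, rule_tac x="TZ # c" in exI) auto
  next
    case 3
    with Cons have "foldl pd 3 ts \<in> {3,4}" by (simp add: pds)
    from f3[OF this] obtain d e where "ts = d @ e" "set d \<subseteq> {TV}" "set e \<subseteq> {X2}" by blast
    with 3 show ?thesis by (rule_tac x="[]" in exI, rule_tac x="[]" in exI, rule_tac x="TV # d" in exI) auto
  next
    case 4
    then have "pd 1 t = 5" by (simp add: pds)
    with Cons.prems pd5 show ?thesis by simp
  qed
qed

lemma f0: "foldl pd 0 ts \<in> {3,4} \<Longrightarrow> pat ts"
proof (induction ts)
  case Nil then show ?case by simp
next
  case (Cons t ts)
  consider "t = X1" | "t = TU" | "t \<noteq> X1 \<and> t \<noteq> TU" by blast
  then show ?case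
  proof cases
    case 1
    with Cons have "foldl pd 0 ts \<in> {3,4}" by (simp add: pds)
    with Cons.IH obtain a b c d e where "ts = a @ b @ c @ d @ e" "set a \<subseteq> {X1}" "b \<noteq> []" "set b \<subseteq> {TU}"
      "set c \<subseteq> {TZ}" "d \<noteq> []" "set d \<subseteq> {TV}" "set e \<subseteq> {X2}" unfolding pat_def by blast
    with 1 show ?thesis unfolding pat_def by (rule_tac x="X1 # a" in exI) auto
  next
    case 2
    with Cons have "foldl pd 1 ts \<in> {3,4}" by (simp add: pds)
    from f1[OF this] obtain b c d e where "ts = b @ c @ d @ e" "set b \<subseteq> {TU}" "set c \<subseteq> {TZ}" "d \<noteq> []" "set d \<subseteq> {TV}" "set e \<subseteq> {X2}" by blast
    with 2 show ?thesis unfolding pat_def by (rule_tac x="[]" in exI, rule_tac x="TU # b" in exI) auto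
  next
    case 3
    then have "pd 0 t = 5" by (simp add: pds)
    with Cons.prems pd5 show ?thesis by simp
  qed
qed

lemma pat_iff: "foldl pd 0 ts \<in> {3,4} \<longleftrightarrow> pat ts"
  using f0 pat_back by blast

definition tg :: "tag \<Rightarrow> 'a list \<Rightarrow> ('a \<times> tag) list" where
  "tg t xs = map (\<lambda>a. (a, t)) xs"

definition g1 :: "'a \<times> tag \<Rightarrow> 'a option" where
  "g1 x = (if snd x = TZ then None else Some (fst x))"

definition g2 :: "'a \<times> tag \<Rightarrow> 'a option" where
  "g2 x = (if snd x = X1 \<or> snd x = X2 then None else Some (fst x))"

lemma pmap_g1_tg[simp]: "pmap g1 (tg t xs) = (if t = TZ then [] else xs)"
  by (induction xs) (auto simp: tg_def g1_def)

lemma pmap_g2_tg[simp]: "pmap g2 (tg t xs) = (if t = X1 \<or> t = X2 then [] else xs)"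
  by (induction xs) (auto simp: tg_def g2_def)

lemma fst_tg[simp]: "map fst (tg t xs) = xs"
  by (induction xs) (auto simp: tg_def)

lemma snd_tg: "set (map snd (tg t xs)) \<subseteq> {t}"
  by (induction xs) (auto simp: tg_def)

lemma tg_Nil[simp]: "tg t xs = [] \<longleftrightarrow> xs = []"
  by (simp add: tg_def)

lemma tg_of: "set (map snd xs) \<subseteq> {t} \<Longrightarrow> xs = tg t (map fst xs)"
  by (induction xs) (auto simp: tg_def)

lemma pat_words: "pat (map snd w) \<Longrightarrow> \<exists>x1 u z v x2. u \<noteq> [] \<and> v \<noteq> [] \<and> w = tg X1 x1 @ tg TU u @ tg TZ z @ tg TV v @ tg X2 x2"
proof -
  assume "pat (map snd w)"
  then obtain a b c d e where ts: "map snd w = a @ b @ c @ d @ e" "set a \<subseteq> {X1}" "b \<noteq> []" "set b \<subseteq> {TU}"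
      "set c \<subseteq> {TZ}" "d \<noteq> []" "set d \<subseteq> {TV}" "set e \<subseteq> {X2}" unfolding pat_def by blast
  from ts(1) obtain w1 r1 where 1: "w = w1 @ r1" "a = map snd w1" "b @ c @ d @ e = map snd r1"
    unfolding map_eq_append_conv by blast
  from 1(3) obtain w2 r2 where 2: "r1 = w2 @ r2" "b = map snd w2" "c @ d @ e = map snd r2"
    unfolding append_eq_map_conv by blast
  from 2(3) obtain w3 r3 where 3: "r2 = w3 @ r3" "c = map snd w3" "d @ e = map snd r3"
    unfolding append_eq_map_conv by blast
  from 3(3) obtain w4 w5 where 4: "r3 = w4 @ w5" "d = map snd w4" "e = map snd w5"
    unfolding append_eq_map_conv by blast
  have "w1 = tg X1 (map fst w1)" using tg_of ts(2) 1(2) by blast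
  moreover have "w2 = tg TU (map fst w2)" using tg_of ts(4) 2(2) by blast
  moreover have "w3 = tg TZ (map fst w3)" using tg_of ts(5) 3(2) by blast
  moreover have "w4 = tg TV (map fst w4)" using tg_of ts(7) 4(2) by blast
  moreover have "w5 = tg X2 (map fst w5)" using tg_of ts(8) 4(3) by blast
  moreover have "map fst w2 \<noteq> []" "map fst w4 \<noteq> []" using ts(3,6) 2(2) 4(2) by auto
  ultimately show ?thesis using 1(1) 2(1) 3(1) 4(1)
    by (rule_tac x="map fst w1" in exI, rule_tac x="map fst w2" in exI, rule_tac x="map fst w3" in exI,
        rule_tac x="map fst w4" in exI, rule_tac x="map fst w5" in exI) metis
qed

lemma words_pat: "u \<noteq> [] \<Longrightarrow> v \<noteq> [] \<Longrightarrow> pat (map snd (tg X1 x1 @ tg TU u @ tg TZ z @ tg TV v @ tg X2 x2))"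
  unfolding pat_def
  by (rule_tac x="map snd (tg X1 x1)" in exI, rule_tac x="map snd (tg TU u)" in exI,
      rule_tac x="map snd (tg TZ z)" in exI, rule_tac x="map snd (tg TV v)" in exI,
      rule_tac x="map snd (tg X2 x2)" in exI) (auto simp: tg_def)

lemma outfix_mem: "s \<in> outfix_ins_lang A B \<longleftrightarrow>
   (\<exists>x1 u z v x2. s = x1 @ u @ z @ v @ x2 \<and> x1 @ u @ v @ x2 \<in> A \<and> u @ z @ v \<in> B \<and> u \<noteq> [] \<and> v \<noteq> [])"
proof
  assume "s \<in> outfix_ins_lang A B"
  then obtain x y where xy: "x \<in> A" "y \<in> B" "s \<in> outfix_ins x y" unfolding outfix_ins_lang_def by blast
  from xy(3) obtain x1 u z v x2 where "s = x1 @ u @ z @ v @ x2" "x = x1 @ u @ v @ x2" "y = u @ z @ v" "u \<noteq> []" "v \<noteq> []"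
    unfolding outfix_ins_def by blast
  with xy show "\<exists>x1 u z v x2. s = x1 @ u @ z @ v @ x2 \<and> x1 @ u @ v @ x2 \<in> A \<and> u @ z @ v \<in> B \<and> u \<noteq> [] \<and> v \<noteq> []"
    by blast
next
  assume "\<exists>x1 u z v x2. s = x1 @ u @ z @ v @ x2 \<and> x1 @ u @ v @ x2 \<in> A \<and> u @ z @ v \<in> B \<and> u \<noteq> [] \<and> v \<noteq> []"
  then obtain x1 u z v x2 where d: "s = x1 @ u @ z @ v @ x2" "x1 @ u @ v @ x2 \<in> A" "u @ z @ v \<in> B" "u \<noteq> []" "v \<noteq> []"
    by blast
  then have "s \<in> outfix_ins (x1 @ u @ v @ x2) (u @ z @ v)" unfolding outfix_ins_def by blast
  with d(2,3) show "s \<in> outfix_ins_lang A B" unfolding outfix_ins_lang_def by blast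
qed

lemma char: "map fst ` {w. pat (map snd w) \<and> pmap g1 w \<in> A \<and> pmap g2 w \<in> B} = outfix_ins_lang A B"
proof (intro set_eqI iffI)
  fix s assume "s \<in> map fst ` {w. pat (map snd w) \<and> pmap g1 w \<in> A \<and> pmap g2 w \<in> B}"
  then obtain w where w: "s = map fst w" "pat (map snd w)" "pmap g1 w \<in> A" "pmap g2 w \<in> B" by blast
  from pat_words[OF w(2)] obtain x1 u z v x2 where d: "u \<noteq> []" "v \<noteq> []"
     "w = tg X1 x1 @ tg TU u @ tg TZ z @ tg TV v @ tg X2 x2" by blast
  show "s \<in> outfix_ins_lang A B" unfolding outfix_mem
    using w d by (rule_tac x=x1 in exI, rule_tac x=u in exI, rule_tac x=z in exI, rule_tac x=v in exI,
        rule_tac x=x2 in exI) simp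
next
  fix s assume "s \<in> outfix_ins_lang A B"
  then obtain x1 u z v x2 where d: "s = x1 @ u @ z @ v @ x2" "x1 @ u @ v @ x2 \<in> A" "u @ z @ v \<in> B" "u \<noteq> []" "v \<noteq> []"
    unfolding outfix_mem by blast
  let ?w = "tg X1 x1 @ tg TU u @ tg TZ z @ tg TV v @ tg X2 x2"
  have "pat (map snd ?w)" using words_pat d(4,5) by blast
  moreover have "pmap g1 ?w \<in> A" "pmap g2 ?w \<in> B" "s = map fst ?w" using d by simp_all
  ultimately show "s \<in> map fst ` {w. pat (map snd w) \<and> pmap g1 w \<in> A \<and> pmap g2 w \<in> B}" by blast
qed

definition Dm :: "('c \<times> tag \<Rightarrow> 'a option) \<Rightarrow> (nat \<Rightarrow> 'a \<Rightarrow> nat) \<Rightarrow> nat \<times> nat \<Rightarrow> 'c \<times> tag \<Rightarrow> nat \<times> nat" where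
  "Dm g d st x = ((case g (fst x, snd x) of None \<Rightarrow> fst st | Some c \<Rightarrow> d (fst st) c), pd (snd st) (snd x))"

lemma foldl_Dm: "foldl (Dm g d) st w = (foldl d (fst st) (pmap g w), foldl pd (snd st) (map snd w))"
  by (induction w arbitrary: st) (auto simp: Dm_def split: option.splits)

lemma cfl_tagged:
  fixes A B :: "('a::finite) list set" and g g' :: "'a \<times> tag \<Rightarrow> 'a option"
  assumes "cfl A" and "regular_lang B"
  shows "cfl {w. pat (map snd w) \<and> pmap g w \<in> A \<and> pmap g' w \<in> B}"
proof -
  from assms(2) obtain Q q0 d F where R: "finite (Q::nat set)" "q0 \<in> Q" "\<forall>q\<in>Q. \<forall>a. d q a \<in> Q" "F \<subseteq> Q"
     "B = {w. foldl d q0 w \<in> F}" unfolding regular_lang_def by blast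
  have c1: "cfl {w. pmap g w \<in> A}" using cfl_inv[OF assms(1)] by blast
  have cl: "\<forall>q\<in>Q \<times> {..5}. \<forall>a. Dm g' d q a \<in> Q \<times> {..5}"
    using R(3) pd_le by (auto simp: Dm_def split: option.splits)
  have "cfl ({w. pmap g w \<in> A} \<inter> {w. foldl (Dm g' d) (q0, 0) w \<in> F \<times> {3,4}})"
    by (rule cfl_int[OF c1 _ cl]) (use R in auto)
  moreover have "{w. pmap g w \<in> A} \<inter> {w. foldl (Dm g' d) (q0, 0) w \<in> F \<times> {3,4}} =
     {w. pat (map snd w) \<and> pmap g w \<in> A \<and> pmap g' w \<in> B}"
    unfolding foldl_Dm R(5) using pat_iff by auto
  ultimately show ?thesis by simp
qed

theorem theorem5p3:
  fixes L1 L2 :: "('a::finite) list set"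
  assumes "context_free L1" and "regular_lang L2"
  shows "context_free (outfix_ins_lang L1 L2) \<and> context_free (outfix_ins_lang L2 L1)"
proof
  have c: "cfl L1" using assms(1) context_free_cfl by blast
  have "cfl {w. pat (map snd w) \<and> pmap g1 w \<in> L1 \<and> pmap g2 w \<in> L2}"
    by (rule cfl_tagged[OF c assms(2)])
  from cfl_map[OF this, of fst] show "context_free (outfix_ins_lang L1 L2)"
    unfolding char context_free_cfl .
next
  have c: "cfl L1" using assms(1) context_free_cfl by blast
  have "cfl {w. pat (map snd w) \<and> pmap g2 w \<in> L1 \<and> pmap g1 w \<in> L2}"
    by (rule cfl_tagged[OF c assms(2)])
  moreover have "{w. pat (map snd w) \<and> pmap g2 w \<in> L1 \<and> pmap g1 w \<in> L2} =
      {w. pat (map snd w) \<and> pmap g1 w \<in> L2 \<and> pmap g2 w \<in> L1}" by blast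
  ultimately have "cfl {w. pat (map snd w) \<and> pmap g1 w \<in> L2 \<and> pmap g2 w \<in> L1}" by simp
  from cfl_map[OF this, of fst] show "context_free (outfix_ins_lang L2 L1)"
    unfolding char context_free_cfl .
qed

end
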